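(* For every $e\in\mathrm{Exp}$, $$e\equiv \mathrm{GS}_{\alpha\in\mathrm{At}}\Big(\bigoplus_{d\in\mathrm{supp}(\partial(e)_\alpha)}\partial(e)_\alpha(d)\cdot\exp(d)\Big),$$ where $\exp:\{\mathsf{acc},\mathsf{rej}\}+\mathrm{Out}+\mathrm{Act}\times\mathrm{Exp}\to\mathrm{Exp}$ is given by $\exp(\mathsf{rej})=\mathtt 0$, $\exp(\mathsf{acc})=\mathtt 1$, $\exp(v)=v$ for $v\in\mathrm{Out}$, and $\exp(p,f)=p;f$.
   Context: Fix a finite set $T$ of primitive tests, a set $\mathrm{Act}$ of atomic actions, a set $\mathrm{Out}$ of return values, and a semiring $(S,+,\cdot,0,1)$ that is positive ($x+y=0\Rightarrow x=y=0$), refinement (whenever $x+y=z+w$ there exist $s,t,u,v$ with $s+t=x$, $s+u=z$, $u+v=y$, $t+v=w$) and Conway (with ${}^*:S\to S$ satisfying $(a+b)^*=a^*(ba^* )^*$, $(ab)^*=1+a(ba)^*b$). Tests: $b,c\in\mathrm{BExp}::=\mathtt{0}\mid\mathtt{1}\mid t\ (t\in T)\mid\bar b\mid b+c\mid bc$ ($\mathtt 0,\mathtt 1$ false/true, distinct from semiring $0,1$); $\equiv_{BA}$ is Boolean equivalence; $\mathrm{At}$ is the finite set of atoms of the free Boolean algebra on $T$, atoms also regarded as tests; $\alpha\le b$ means $\alpha$ entails $b$. Expressions: $e,f\in\mathrm{Exp}::= p\in\mathrm{Act}\mid b\in\mathrm{BExp}\mid e+_b f\mid e;f\mid e^{(b)}\mid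 v\in\mathrm{Out}\mid e\oplus_{r,s} f\ (r,s\in S)$; $\odot r:=\mathtt 1\oplus_{r,0}\mathtt 0$. $\mathcal M_\omega(X)$: finitely supported maps $X\to S$, pointwise operations; $\delta_x$ indicator of $x$; $\mathrm{supp}(\nu)=\{x:\nu(x)\neq0\}$. The derivative $\partial:\mathrm{Exp}\to\mathcal M_\omega(\{\mathsf{acc},\mathsf{rej}\}+\mathrm{Out}+\mathrm{Act}\times\mathrm{Exp})^{\mathrm{At}}$: $\partial(b)_\alpha=\delta_{\mathsf{acc}}$ if $\alpha\le b$, else $\delta_{\mathsf{rej}}$; $\partial(v)_\alpha=\delta_v$; $\partial(p)_\alpha=\delta_{(p,\mathtt 1)}$; $\partial(e+_bf)_\alpha=\partial(e)_\alpha$ if $\alpha\le b$, else $\partial(f)_\alpha$; $\partial(e\oplus_{r,s}f)_\alpha=r\partial(e)_\alpha+s\partial(f)_\alpha$; $\partial(e;f)_\alpha=\sum_x\partial(e)_\alpha(x)c_{\alpha,f}(x)$ with $c_{\alpha,f}(\mathsf{acc})=\partial(f)_\alpha$, $c_{\alpha,f}(x)=\delta_x$ for $x\in\{\mathsf{rej}\}\cup\mathrm{Out}$, $c_{\alpha,f}(p,e')=\delta_{(p,e';f)}$; $\partial(e^{(b)})_\alpha(x)$ is $1$ if $x=\mathsf{acc}$ and $\alpha\le\bar b$; $\partial(e)_\alpha(\mathsf{acc})^*\partial(e)_\alpha(x)$ if $x\in\{\mathsf{rej}\}\cup\mathrm{Out}$ and $\alpha\le b$; $\partial(e)_\alpha(\mathsf{acc})^*\partial(e)_\alpha(p,e')$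 if $x=(p,e';e^{(b)})$ and $\alpha\le b$; $0$ otherwise. Generalized guarded sum over $\Phi\subseteq\mathrm{At}$: $\mathrm{GS}_{\alpha\in\emptyset}e_\alpha:=\mathtt 0$ and $\mathrm{GS}_{\alpha\in\Phi}e_\alpha:=e_\gamma+_\gamma\mathrm{GS}_{\alpha\in\Phi\setminus\{\gamma\}}e_\alpha$ for some $\gamma\in\Phi$. Generalized weighted sum: $\bigoplus_{i\in I}r_i\cdot e_i:=e_j\oplus_{r_j,1}\big(\bigoplus_{i\in I\setminus\{j\}}r_i\cdot e_i\big)$ for some $j\in I$, the empty weighted sum being $\odot0$. Both are well defined up to $\equiv$. $E:\mathrm{Exp}\to S^{\mathrm{At}}$: $E(p)_\alpha=E(v)_\alpha=0$; $E(b)_\alpha=1$ if $\alpha\le b$ else $0$; $E(e\oplus_{r,s}f)_\alpha=rE(e)_\alpha+sE(f)_\alpha$; $E(e+_bf)_\alpha=E(e)_\alpha$ if $\alpha\le b$ else $E(f)_\alpha$; $E(e;f)_\alpha=E(e)_\alpha E(f)_\alpha$; $E(e^{(b)})_\alpha=E(\bar b)_\alpha$. The relation $\equiv$ is the smallest congruence on $\mathrm{Exp}$ (tests taken up to $\equiv_{BA}$; sequencing binds tighter than $\oplus$, $\odot$ binds tightest) containing, for all $e,f,g\in\mathrm{Exp}$, tests $b,c$, $v\in\mathrm{Out}$, $r,s,t,u\in S$: (G1) $e+_be\equiv e$; (G2) $e+_bf\equiv b;e+_bf$; (G3) $e+_bf\equiv f+_{\bar b}e$; (G4) $(e+_bf)+_cg\equiv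 e+_{bc}(f+_cg)$; (D1) $e\oplus_{r,s}(f+_bg)\equiv(e\oplus_{r,s}f)+_b(e\oplus_{r,s}g)$; (D2) $e\oplus_{r,s}(f\oplus_{t,u}g)\equiv e\oplus_{r,1}(f\oplus_{st,su}g)$; (D3) $b;(e\oplus_{r,s}f)\equiv b;(b;e\oplus_{r,s}b;f)$; (S1) $\mathtt 1;e\equiv e\equiv e;\mathtt 1$; (S2) $(e;f);g\equiv e;(f;g)$; (S3) $\mathtt 0;e\equiv\mathtt 0$; (S4) $(e\oplus_{r,s}f);g\equiv e;g\oplus_{r,s}f;g$; (S5) $(e+_bf);g\equiv e;g+_bf;g$; (S6) $v;e\equiv v$; (S7) $b;c\equiv bc$; (L1) $e^{(b)}\equiv e;e^{(b)}+_b\mathtt 1$; (C1) $\odot1\equiv\mathtt 1$; (C2) $\odot0;e\equiv\odot0$; (W1) $e\oplus_{r,s}e\equiv\odot(r+s);e$; (W2) $e\oplus_{r,s}f\equiv f\oplus_{s,r}e$; (W3) $e\oplus_{r,s}(f\oplus_{t,u}g)\equiv(e\oplus_{r,st}f)\oplus_{1,su}g$; (W4) $e\oplus_{ru,s}f\equiv(\odot u;e)\oplus_{r,s}f$; and closed under the rules (L2) if $e\equiv(f\oplus_{r,s}\mathtt 1)+_cg$ then $c;e^{(b)}\equiv c;((\odot(s^*r);f;e^{(b)})+_b\mathtt 1)$; (F1) if $g\equiv e;g+_bf$ and $E(e)_\alpha=0$ for all $\alpha\in\mathrm{At}$ then $g\equiv e^{(b)};f$. *)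

theory Defs
  imports Main
begin

datatype 't bexp = BZero | BOne | BVar 't | BNot "'t bexp" | BPlus "'t bexp" "'t bexp"
  | BAnd "'t bexp" "'t bexp"

text \<open>Atoms of the free Boolean algebra on the finite set T are identified with
  truth assignments 't \<Rightarrow> bool; alpha \<le> b means that b holds under alpha.\<close>
type_synonym 't atom = "'t \<Rightarrow> bool"

primrec evalB :: "'t bexp \<Rightarrow> 't atom \<Rightarrow> bool" where
  "evalB BZero \<alpha> = False"
| "evalB BOne \<alpha> = True"
| "evalB (BVar t) \<alpha> = \<alpha> t"
| "evalB (BNot b) \<alpha> = (\<not> evalB b \<alpha>)"
| "evalB (BPlus b c) \<alpha> = (evalB b \<alpha> \<or> evalB c \<alpha>)"
| "evalB (BAnd b c) \<alpha> = (evalB b \<alpha> \<and> evalB c \<alpha>)"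

definition beq :: "'t bexp \<Rightarrow> 't bexp \<Rightarrow> bool" where
  "beq b c \<longleftrightarrow> (\<forall>\<alpha>. evalB b \<alpha> = evalB c \<alpha>)"

text \<open>An atom regarded as a test (any test equivalent to it; unique up to beq).\<close>
definition atom_test :: "'t atom \<Rightarrow> 't bexp" where
  "atom_test \<alpha> = (SOME b. \<forall>\<beta>. evalB b \<beta> = (\<beta> = \<alpha>))"

datatype ('t, 'p, 'v, 's) exp =
    Act 'p
  | Test "'t bexp"
  | Guard "('t, 'p, 'v, 's) exp" "'t bexp" "('t, 'p, 'v, 's) exp"
  | Seq "('t, 'p, 'v, 's) exp" "('t, 'p, 'v, 's) exp"
  | Loop "('t, 'p, 'v, 's) exp" "'t bexp"
  | Ret 'v
  | Prob "('t, 'p, 'v, 's) exp" 's 's "('t, 'p, 'v, 's) exp"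

definition odot :: "'s::{semiring_0,monoid_mult} \<Rightarrow> ('t, 'p, 'v, 's) exp" where
  "odot r = Prob (Test BOne) r 0 (Test BZero)"

datatype ('p, 'v, 'e) dres = DAcc | DRej | DOut 'v | DAct 'p 'e

definition delta :: "'a \<Rightarrow> 'a \<Rightarrow> 's::{semiring_0,monoid_mult}" where
  "delta x = (\<lambda>y. if y = x then 1 else 0)"

text \<open>Finitely supported maps are represented as plain functions; sums over the
  (finite) support.\<close>
definition supp :: "('a \<Rightarrow> 's::zero) \<Rightarrow> 'a set" where
  "supp \<nu> = {x. \<nu> x \<noteq> 0}"

definition cont :: "('t, 'p, 'v, 's) exp \<Rightarrow> (('p, 'v, ('t, 'p, 'v, 's) exp) dres \<Rightarrow> 's)
    \<Rightarrow> ('p, 'v, ('t, 'p, 'v, 's) exp) dres \<Rightarrow> ('p, 'v, ('t, 'p, 'v, 's) exp) dres \<Rightarrow> 's::{semiring_0,monoid_mult}"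
  where
  "cont f df x = (case x of DAcc \<Rightarrow> df
       | DRej \<Rightarrow> delta DRej
       | DOut v \<Rightarrow> delta (DOut v)
       | DAct p e' \<Rightarrow> delta (DAct p (Seq e' f)))"

primrec deriv :: "('s \<Rightarrow> 's) \<Rightarrow> ('t, 'p, 'v, 's::{semiring_0,monoid_mult}) exp \<Rightarrow> 't atom
    \<Rightarrow> ('p, 'v, ('t, 'p, 'v, 's) exp) dres \<Rightarrow> 's" where
  "deriv st (Test b) \<alpha> = (if evalB b \<alpha> then delta DAcc else delta DRej)"
| "deriv st (Ret v) \<alpha> = delta (DOut v)"
| "deriv st (Act p) \<alpha> = delta (DAct p (Test BOne))"
| "deriv st (Guard e b f) \<alpha> = (if evalB b \<alpha> then deriv st e \<alpha> else deriv st f \<alpha>)"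
| "deriv st (Prob e r s f) \<alpha> = (\<lambda>x. r * deriv st e \<alpha> x + s * deriv st f \<alpha> x)"
| "deriv st (Seq e f) \<alpha> =
     (\<lambda>y. \<Sum>x\<in>supp (deriv st e \<alpha>). deriv st e \<alpha> x * cont f (deriv st f \<alpha>) x y)"
| "deriv st (Loop e b) \<alpha> =
     (\<lambda>x. case x of
        DAcc \<Rightarrow> (if \<not> evalB b \<alpha> then 1 else 0)
      | DRej \<Rightarrow> (if evalB b \<alpha> then st (deriv st e \<alpha> DAcc) * deriv st e \<alpha> DRej else 0)
      | DOut v \<Rightarrow> (if evalB b \<alpha> then st (deriv st e \<alpha> DAcc) * deriv st e \<alpha> (DOut v) else 0)
      | DAct p g \<Rightarrow> (case g of
            Seq e' h \<Rightarrow> (if h = Loop e b \<and> evalB b \<alpha>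
                          then st (deriv st e \<alpha> DAcc) * deriv st e \<alpha> (DAct p e') else 0)
          | _ \<Rightarrow> 0))"

primrec expD :: "('p, 'v, ('t, 'p, 'v, 's) exp) dres \<Rightarrow> ('t, 'p, 'v, 's) exp" where
  "expD DRej = Test BZero"
| "expD DAcc = Test BOne"
| "expD (DOut v) = Ret v"
| "expD (DAct p f) = Seq (Act p) f"

definition enum_of :: "'a set \<Rightarrow> 'a list" where
  "enum_of A = (SOME xs. distinct xs \<and> set xs = A)"

primrec gs_list :: "'t atom list \<Rightarrow> ('t atom \<Rightarrow> ('t, 'p, 'v, 's) exp) \<Rightarrow> ('t, 'p, 'v, 's) exp" where
  "gs_list [] e = Test BZero"
| "gs_list (\<gamma> # \<gamma>s) e = Guard (e \<gamma>) (atom_test \<gamma>) (gs_list \<gamma>s e)"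

definition GS :: "'t atom set \<Rightarrow> ('t atom \<Rightarrow> ('t, 'p, 'v, 's) exp) \<Rightarrow> ('t, 'p, 'v, 's) exp" where
  "GS \<Phi> e = gs_list (enum_of \<Phi>) e"

primrec ws_list :: "'i list \<Rightarrow> ('i \<Rightarrow> 's::{semiring_0,monoid_mult}) \<Rightarrow> ('i \<Rightarrow> ('t, 'p, 'v, 's) exp)
    \<Rightarrow> ('t, 'p, 'v, 's) exp" where
  "ws_list [] r e = odot 0"
| "ws_list (j # js) r e = Prob (e j) (r j) 1 (ws_list js r e)"

definition WS :: "'i set \<Rightarrow> ('i \<Rightarrow> 's::{semiring_0,monoid_mult}) \<Rightarrow> ('i \<Rightarrow> ('t, 'p, 'v, 's) exp)
    \<Rightarrow> ('t, 'p, 'v, 's) exp" where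
  "WS I r e = ws_list (enum_of I) r e"

primrec Ef :: "('t, 'p, 'v, 's::{semiring_0,monoid_mult}) exp \<Rightarrow> 't atom \<Rightarrow> 's" where
  "Ef (Act p) \<alpha> = 0"
| "Ef (Ret v) \<alpha> = 0"
| "Ef (Test b) \<alpha> = (if evalB b \<alpha> then 1 else 0)"
| "Ef (Prob e r s f) \<alpha> = r * Ef e \<alpha> + s * Ef f \<alpha>"
| "Ef (Guard e b f) \<alpha> = (if evalB b \<alpha> then Ef e \<alpha> else Ef f \<alpha>)"
| "Ef (Seq e f) \<alpha> = Ef e \<alpha> * Ef f \<alpha>"
| "Ef (Loop e b) \<alpha> = (if evalB (BNot b) \<alpha> then 1 else 0)"

inductive eqv :: "('s \<Rightarrow> 's) \<Rightarrow> ('t, 'p, 'v, 's::{semiring_0,monoid_mult}) exp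
    \<Rightarrow> ('t, 'p, 'v, 's) exp \<Rightarrow> bool" for st where
  refl: "eqv st e e"
| sym: "eqv st e f \<Longrightarrow> eqv st f e"
| trans: "eqv st e f \<Longrightarrow> eqv st f g \<Longrightarrow> eqv st e g"
| cong_guard: "eqv st e e' \<Longrightarrow> eqv st f f' \<Longrightarrow> eqv st (Guard e b f) (Guard e' b f')"
| cong_seq: "eqv st e e' \<Longrightarrow> eqv st f f' \<Longrightarrow> eqv st (Seq e f) (Seq e' f')"
| cong_loop: "eqv st e e' \<Longrightarrow> eqv st (Loop e b) (Loop e' b)"
| cong_prob: "eqv st e e' \<Longrightarrow> eqv st f f' \<Longrightarrow> eqv st (Prob e r s f) (Prob e' r s f')"
| ba_test: "beq b c \<Longrightarrow> eqv st (Test b) (Test c)"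
| ba_guard: "beq b c \<Longrightarrow> eqv st (Guard e b f) (Guard e c f)"
| ba_loop: "beq b c \<Longrightarrow> eqv st (Loop e b) (Loop e c)"
| G1: "eqv st (Guard e b e) e"
| G2: "eqv st (Guard e b f) (Guard (Seq (Test b) e) b f)"
| G3: "eqv st (Guard e b f) (Guard f (BNot b) e)"
| G4: "eqv st (Guard (Guard e b f) c g) (Guard e (BAnd b c) (Guard f c g))"
| D1: "eqv st (Prob e r s (Guard f b g)) (Guard (Prob e r s f) b (Prob e r s g))"
| D2: "eqv st (Prob e r s (Prob f t u g)) (Prob e r 1 (Prob f (s * t) (s * u) g))"
| D3: "eqv st (Seq (Test b) (Prob e r s f)) (Seq (Test b) (Prob (Seq (Test b) e) r s (Seq (Test b) f)))"
| S1a: "eqv st (Seq (Test BOne) e) e"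
| S1b: "eqv st e (Seq e (Test BOne))"
| S2: "eqv st (Seq (Seq e f) g) (Seq e (Seq f g))"
| S3: "eqv st (Seq (Test BZero) e) (Test BZero)"
| S4: "eqv st (Seq (Prob e r s f) g) (Prob (Seq e g) r s (Seq f g))"
| S5: "eqv st (Seq (Guard e b f) g) (Guard (Seq e g) b (Seq f g))"
| S6: "eqv st (Seq (Ret v) e) (Ret v)"
| S7: "eqv st (Seq (Test b) (Test c)) (Test (BAnd b c))"
| L1: "eqv st (Loop e b) (Guard (Seq e (Loop e b)) b (Test BOne))"
| C1: "eqv st (odot 1) (Test BOne)"
| C2: "eqv st (Seq (odot 0) e) (odot 0)"
| W1: "eqv st (Prob e r s e) (Seq (odot (r + s)) e)"
| W2: "eqv st (Prob e r s f) (Prob f s r e)"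
| W3: "eqv st (Prob e r s (Prob f t u g)) (Prob (Prob e r (s * t) f) 1 (s * u) g)"
| W4: "eqv st (Prob e (r * u) s f) (Prob (Seq (odot u) e) r s f)"
| L2: "eqv st e (Guard (Prob f r s (Test BOne)) c g) \<Longrightarrow>
       eqv st (Seq (Test c) (Loop e b))
              (Seq (Test c) (Guard (Seq (odot (st s * r)) (Seq f (Loop e b))) b (Test BOne)))"
| F1: "eqv st g (Guard (Seq e g) b f) \<Longrightarrow> (\<forall>\<alpha>. Ef e \<alpha> = 0) \<Longrightarrow> eqv st g (Seq (Loop e b) f)"

definition positive_sr :: "'s::{semiring_0,monoid_mult} itself \<Rightarrow> bool" where
  "positive_sr _ \<longleftrightarrow> (\<forall>x y :: 's. x + y = 0 \<longrightarrow> x = 0 \<and> y = 0)"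

definition refinement_sr :: "'s::{semiring_0,monoid_mult} itself \<Rightarrow> bool" where
  "refinement_sr _ \<longleftrightarrow> (\<forall>x y z w :: 's. x + y = z + w \<longrightarrow>
      (\<exists>s t u v. s + t = x \<and> s + u = z \<and> u + v = y \<and> t + v = w))"

definition conway :: "('s::{semiring_0,monoid_mult} \<Rightarrow> 's) \<Rightarrow> bool" where
  "conway st \<longleftrightarrow> (\<forall>a b. st (a + b) = st a * st (b * st a)) \<and>
                  (\<forall>a b. st (a * b) = 1 + a * st (b * a) * b)"

end

theory Submission
  imports Defs
begin


lemmas [trans] = eqv.trans

lemma esym: "eqv st a b \<Longrightarrow> eqv st b a" by (rule eqv.sym)

lemma beqI: "(\<And>\<alpha>. evalB b \<alpha> = evalB c \<alpha>) \<Longrightarrow> beq b c"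
  unfolding beq_def by auto

lemma test_guard: "eqv st (Test b) (Guard (Test BOne) b (Test BZero))"
proof -
  have "eqv st (Test b) (Guard (Test b) b (Test b))" by (rule esym, rule eqv.G1)
  also have "eqv st \<dots> (Guard (Test b) (BNot b) (Test b))" by (rule eqv.G3)
  also have "eqv st \<dots> (Guard (Seq (Test (BNot b)) (Test b)) (BNot b) (Test b))" by (rule eqv.G2)
  also have "eqv st \<dots> (Guard (Test (BAnd (BNot b) b)) (BNot b) (Test b))"
    by (rule eqv.cong_guard, rule eqv.S7, rule eqv.refl)
  also have "eqv st \<dots> (Guard (Test BZero) (BNot b) (Test b))"
    by (rule eqv.cong_guard, rule eqv.ba_test, simp add: beq_def, rule eqv.refl)
  also have "eqv st \<dots> (Guard (Test b) (BNot (BNot b)) (Test BZero))" by (rule eqv.G3)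
  also have "eqv st \<dots> (Guard (Test b) b (Test BZero))" by (rule eqv.ba_guard, simp add: beq_def)
  finally have 1: "eqv st (Test b) (Guard (Test b) b (Test BZero))" .
  have "eqv st (Guard (Test BOne) b (Test BZero)) (Guard (Seq (Test b) (Test BOne)) b (Test BZero))"
    by (rule eqv.G2)
  also have "eqv st \<dots> (Guard (Test (BAnd b BOne)) b (Test BZero))"
    by (rule eqv.cong_guard, rule eqv.S7, rule eqv.refl)
  also have "eqv st \<dots> (Guard (Test b) b (Test BZero))"
    by (rule eqv.cong_guard, rule eqv.ba_test, simp add: beq_def, rule eqv.refl)
  finally show ?thesis using 1 by (meson eqv.sym eqv.trans)
qed

lemma seq_test_guard: "eqv st (Seq (Test b) g) (Guard g b (Test BZero))"
proof -
  have "eqv st (Seq (Test b) g) (Seq (Guard (Test BOne) b (Test BZero)) g)"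
    by (rule eqv.cong_seq, rule test_guard, rule eqv.refl)
  also have "eqv st \<dots> (Guard (Seq (Test BOne) g) b (Seq (Test BZero) g))" by (rule eqv.S5)
  also have "eqv st \<dots> (Guard g b (Test BZero))"
    by (rule eqv.cong_guard, rule eqv.S1a, rule eqv.S3)
  finally show ?thesis .
qed

lemma guard_zero: "eqv st (Guard y BZero z) z"
proof -
  have "eqv st (Guard y BZero z) (Guard (Seq (Test BZero) y) BZero z)" by (rule eqv.G2)
  also have "eqv st \<dots> (Guard (Test BZero) BZero z)" by (rule eqv.cong_guard, rule eqv.S3, rule eqv.refl)
  finally have 1: "eqv st (Guard y BZero z) (Guard (Test BZero) BZero z)" .
  have "eqv st (Guard z BZero z) (Guard (Seq (Test BZero) z) BZero z)" by (rule eqv.G2)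
  also have "eqv st \<dots> (Guard (Test BZero) BZero z)" by (rule eqv.cong_guard, rule eqv.S3, rule eqv.refl)
  finally have 2: "eqv st (Guard z BZero z) (Guard (Test BZero) BZero z)" .
  show ?thesis using 1 2 eqv.G1[of st z BZero] by (meson eqv.sym eqv.trans)
qed

lemma guard_sides: "eqv st (Guard x b y) (Guard (Seq (Test b) x) b (Seq (Test (BNot b)) y))"
proof -
  have "eqv st (Guard x b y) (Guard (Seq (Test b) x) b y)" by (rule eqv.G2)
  also have "eqv st \<dots> (Guard y (BNot b) (Seq (Test b) x))" by (rule eqv.G3)
  also have "eqv st \<dots> (Guard (Seq (Test (BNot b)) y) (BNot b) (Seq (Test b) x))" by (rule eqv.G2)
  also have "eqv st \<dots> (Guard (Seq (Test b) x) (BNot (BNot b)) (Seq (Test (BNot b)) y))" by (rule eqv.G3)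
  also have "eqv st \<dots> (Guard (Seq (Test b) x) b (Seq (Test (BNot b)) y))"
    by (rule eqv.ba_guard, simp add: beq_def)
  finally show ?thesis .
qed

lemma guard_split:
  assumes "eqv st (Seq (Test b) x) (Seq (Test b) x')"
    and "eqv st (Seq (Test (BNot b)) y) (Seq (Test (BNot b)) y')"
  shows "eqv st (Guard x b y) (Guard x' b y')"
proof -
  have "eqv st (Guard x b y) (Guard (Seq (Test b) x) b (Seq (Test (BNot b)) y))" by (rule guard_sides)
  also have "eqv st \<dots> (Guard (Seq (Test b) x') b (Seq (Test (BNot b)) y'))"
    by (rule eqv.cong_guard, rule assms(1), rule assms(2))
  also have "eqv st \<dots> (Guard x' b y')" by (rule esym, rule guard_sides)
  finally show ?thesis .
qed

lemma test_assoc: "eqv st (Seq (Test a) (Seq (Test c) x)) (Seq (Test (BAnd a c)) x)"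
proof -
  have "eqv st (Seq (Test a) (Seq (Test c) x)) (Seq (Seq (Test a) (Test c)) x)" by (rule esym, rule eqv.S2)
  also have "eqv st \<dots> (Seq (Test (BAnd a c)) x)" by (rule eqv.cong_seq, rule eqv.S7, rule eqv.refl)
  finally show ?thesis .
qed

lemma test_beq: "beq a c \<Longrightarrow> eqv st (Seq (Test a) x) (Seq (Test c) x)"
  by (rule eqv.cong_seq, rule eqv.ba_test, assumption, rule eqv.refl)

lemma guard_left:
  assumes "beq (BAnd b c) c"
  shows "eqv st (Seq (Test c) (Guard x b y)) (Seq (Test c) x)"
proof -
  have "eqv st (Seq (Test c) (Guard x b y)) (Guard (Guard x b y) c (Test BZero))" by (rule seq_test_guard)
  also have "eqv st \<dots> (Guard x (BAnd b c) (Guard y c (Test BZero)))" by (rule eqv.G4)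
  also have "eqv st \<dots> (Guard x c (Guard y c (Test BZero)))" by (rule eqv.ba_guard, rule assms)
  also have "eqv st \<dots> (Guard x c (Test BZero))"
  proof (rule guard_split, rule eqv.refl)
    have "eqv st (Seq (Test (BNot c)) (Guard y c (Test BZero))) (Guard (Guard y c (Test BZero)) (BNot c) (Test BZero))"
      by (rule seq_test_guard)
    also have "eqv st \<dots> (Guard y (BAnd c (BNot c)) (Guard (Test BZero) (BNot c) (Test BZero)))" by (rule eqv.G4)
    also have "eqv st \<dots> (Guard y BZero (Guard (Test BZero) (BNot c) (Test BZero)))"
      by (rule eqv.ba_guard, simp add: beq_def)
    also have "eqv st \<dots> (Guard (Test BZero) (BNot c) (Test BZero))" by (rule guard_zero)
    also have "eqv st \<dots> (Test BZero)" by (rule eqv.G1)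
    also have "eqv st \<dots> (Test (BAnd (BNot c) BZero))" by (rule eqv.ba_test, simp add: beq_def)
    also have "eqv st \<dots> (Seq (Test (BNot c)) (Test BZero))" by (rule esym, rule eqv.S7)
    finally show "eqv st (Seq (Test (BNot c)) (Guard y c (Test BZero))) (Seq (Test (BNot c)) (Test BZero))" .
  qed
  also have "eqv st \<dots> (Seq (Test c) x)" by (rule esym, rule seq_test_guard)
  finally show ?thesis .
qed

lemma guard_right:
  assumes "beq (BAnd c b) BZero"
  shows "eqv st (Seq (Test c) (Guard x b y)) (Seq (Test c) y)"
proof -
  have "eqv st (Seq (Test c) (Guard x b y)) (Seq (Test c) (Guard y (BNot b) x))"
    by (rule eqv.cong_seq, rule eqv.refl, rule eqv.G3)
  also have "eqv st \<dots> (Seq (Test c) y)"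
    by (rule guard_left, insert assms, auto simp: beq_def)
  finally show ?thesis .
qed



lemma atom_test_spec:
  fixes \<alpha> :: "'t::finite atom"
  shows "evalB (atom_test \<alpha>) \<beta> = (\<beta> = \<alpha>)"
proof -
  obtain xs :: "'t list" where xs: "set xs = UNIV" using finite_list[of "UNIV::'t set"] by auto
  define b where "b = foldr (\<lambda>t acc. BAnd (if \<alpha> t then BVar t else BNot (BVar t)) acc) xs BOne"
  have "\<And>\<gamma>. evalB b \<gamma> = (\<forall>t\<in>set xs. \<gamma> t = \<alpha> t)"
    unfolding b_def by (induction xs) auto
  hence "\<forall>\<gamma>. evalB b \<gamma> = (\<gamma> = \<alpha>)" using xs by (auto simp: fun_eq_iff)
  hence "\<exists>b. \<forall>\<gamma>. evalB b \<gamma> = (\<gamma> = \<alpha>)" by blast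
  from someI_ex[OF this] show ?thesis unfolding atom_test_def by blast
qed

lemma atomwise:
  fixes e f :: "('t::finite, 'p, 'v, 's::{semiring_0,monoid_mult}) exp"
  assumes H: "\<And>\<alpha>. eqv st (Seq (Test (atom_test \<alpha>)) e) (Seq (Test (atom_test \<alpha>)) f)"
  shows "eqv st e f"
proof -
  have "\<exists>c. (\<forall>\<beta>. evalB c \<beta> = (\<beta> \<in> A)) \<and> eqv st (Seq (Test c) e) (Seq (Test c) f)"
    if "finite A" for A :: "'t atom set"
    using that
  proof (induction A rule: finite_induct)
    case empty
    have "eqv st (Seq (Test BZero) e) (Seq (Test BZero) f)"
      by (meson eqv.S3 eqv.sym eqv.trans)
    then show ?case by (intro exI[of _ BZero]) auto
  next
    case (insert \<alpha> A)
    then obtain c where c: "\<forall>\<beta>. evalB c \<beta> = (\<beta> \<in> A)" "eqv st (Seq (Test c) e) (Seq (Test c) f)" by blast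
    define a where "a = atom_test \<alpha>"
    define c' where "c' = BPlus a c"
    have ev: "evalB c' \<beta> = (\<beta> \<in> insert \<alpha> A)" for \<beta>
      using c(1) by (auto simp: c'_def a_def atom_test_spec)
    have split: "eqv st (Seq (Test c') g) (Guard (Seq (Test a) g) a (Seq (Test c) g))" for g
    proof -
      have "eqv st (Seq (Test c') g) (Guard (Seq (Test c') g) a (Seq (Test c') g))" by (rule esym, rule eqv.G1)
      also have "eqv st \<dots> (Guard (Seq (Test a) g) a (Seq (Test c) g))"
      proof (rule guard_split)
        have "eqv st (Seq (Test a) (Seq (Test c') g)) (Seq (Test (BAnd a c')) g)" by (rule test_assoc)
        also have "eqv st \<dots> (Seq (Test (BAnd a a)) g)" by (rule test_beq, auto simp: beq_def c'_def)
        also have "eqv st \<dots> (Seq (Test a) (Seq (Test a) g))" by (rule esym, rule test_assoc)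
        finally show "eqv st (Seq (Test a) (Seq (Test c') g)) (Seq (Test a) (Seq (Test a) g))" .
        have "eqv st (Seq (Test (BNot a)) (Seq (Test c') g)) (Seq (Test (BAnd (BNot a) c')) g)" by (rule test_assoc)
        also have "eqv st \<dots> (Seq (Test (BAnd (BNot a) c)) g)" by (rule test_beq, auto simp: beq_def c'_def)
        also have "eqv st \<dots> (Seq (Test (BNot a)) (Seq (Test c) g))" by (rule esym, rule test_assoc)
        finally show "eqv st (Seq (Test (BNot a)) (Seq (Test c') g)) (Seq (Test (BNot a)) (Seq (Test c) g))" .
      qed
      finally show ?thesis .
    qed
    have "eqv st (Seq (Test c') e) (Guard (Seq (Test a) e) a (Seq (Test c) e))" by (rule split)
    also have "eqv st \<dots> (Guard (Seq (Test a) f) a (Seq (Test c) f))"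
      by (rule eqv.cong_guard, unfold a_def, rule H, rule c(2))
    also have "eqv st \<dots> (Seq (Test c') f)" by (rule esym, rule split)
    finally show ?case using ev by blast
  qed
  from this[of UNIV] obtain c where c: "\<forall>\<beta>. evalB c \<beta>" "eqv st (Seq (Test c) e) (Seq (Test c) f)" by auto
  have "eqv st e (Seq (Test BOne) e)" by (rule esym, rule eqv.S1a)
  also have "eqv st \<dots> (Seq (Test c) e)" by (rule test_beq, simp add: beq_def c)
  also have "eqv st \<dots> (Seq (Test c) f)" by (rule c(2))
  also have "eqv st \<dots> (Seq (Test BOne) f)" by (rule test_beq, simp add: beq_def c)
  also have "eqv st \<dots> f" by (rule eqv.S1a)
  finally show ?thesis .
qed

lemma enum_of_spec: "finite A \<Longrightarrow> distinct (enum_of A) \<and> set (enum_of A) = A"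
  unfolding enum_of_def by (metis (mono_tags, lifting) finite_distinct_list someI_ex)

lemma gs_list_atom:
  fixes \<alpha> :: "'t::finite atom"
  shows "\<alpha> \<in> set L \<Longrightarrow> eqv st (Seq (Test (atom_test \<alpha>)) (gs_list L g)) (Seq (Test (atom_test \<alpha>)) (g \<alpha>))"
proof (induction L)
  case Nil then show ?case by simp
next
  case (Cons \<gamma> L)
  show ?case
  proof (cases "\<gamma> = \<alpha>")
    case True
    have "eqv st (Seq (Test (atom_test \<alpha>)) (Guard (g \<gamma>) (atom_test \<gamma>) (gs_list L g))) (Seq (Test (atom_test \<alpha>)) (g \<gamma>))"
      by (rule guard_left, use True in \<open>auto simp: beq_def atom_test_spec\<close>)
    then show ?thesis using True by simp
  next
    case False
    then have "\<alpha> \<in> set L" using Cons by auto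
    have "eqv st (Seq (Test (atom_test \<alpha>)) (gs_list (\<gamma> # L) g)) (Seq (Test (atom_test \<alpha>)) (gs_list L g))"
      by (simp, rule guard_right, use False in \<open>auto simp: beq_def atom_test_spec\<close>)
    then show ?thesis using Cons.IH[OF \<open>\<alpha> \<in> set L\<close>] by (rule eqv.trans)
  qed
qed

lemma GS_intro:
  fixes e :: "('t::finite, 'p, 'v, 's::{semiring_0,monoid_mult}) exp"
  assumes "\<And>\<alpha>. eqv st (Seq (Test (atom_test \<alpha>)) e) (Seq (Test (atom_test \<alpha>)) (g \<alpha>))"
  shows "eqv st e (GS UNIV g)"
proof (rule atomwise)
  fix \<alpha> :: "'t atom"
  have "\<alpha> \<in> set (enum_of (UNIV :: 't atom set))" using enum_of_spec[of "UNIV :: 't atom set"] by simp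
  then show "eqv st (Seq (Test (atom_test \<alpha>)) e) (Seq (Test (atom_test \<alpha>)) (GS UNIV g))"
    unfolding GS_def using assms gs_list_atom by (meson eqv.sym eqv.trans)
qed



primrec ws :: "('s::{semiring_0,monoid_mult} \<times> ('t, 'p, 'v, 's) exp) list \<Rightarrow> ('t, 'p, 'v, 's) exp" where
  "ws [] = odot 0"
| "ws (q # L) = Prob (snd q) (fst q) 1 (ws L)"

definition scl :: "'s::{semiring_0,monoid_mult} \<Rightarrow> ('s \<times> ('t, 'p, 'v, 's) exp) list \<Rightarrow> ('s \<times> ('t, 'p, 'v, 's) exp) list" where
  "scl u L = map (\<lambda>q. (u * fst q, snd q)) L"

definition wt :: "('s::{semiring_0,monoid_mult} \<times> ('t, 'p, 'v, 's) exp) list \<Rightarrow> ('t, 'p, 'v, 's) exp \<Rightarrow> 's" where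
  "wt L x = sum_list (map fst (filter (\<lambda>q. snd q = x) L))"

lemma ws_list_ws: "ws_list xs r e = ws (map (\<lambda>j. (r j, e j)) xs)"
  by (induction xs) auto

lemma odot_seq: "eqv st (Seq (odot u) X) (Prob X u 0 (Test BZero))"
proof -
  have "eqv st (Seq (odot u) X) (Prob (Seq (Test BOne) X) u 0 (Seq (Test BZero) X))"
    unfolding odot_def by (rule eqv.S4)
  also have "eqv st \<dots> (Prob X u 0 (Test BZero))" by (rule eqv.cong_prob, rule eqv.S1a, rule eqv.S3)
  finally show ?thesis .
qed

lemma prob_10_zero: "eqv st e (Prob e 1 0 (Test BZero))"
proof -
  have "eqv st e (Seq (Test BOne) e)" by (rule esym, rule eqv.S1a)
  also have "eqv st \<dots> (Seq (odot 1) e)" by (rule eqv.cong_seq, rule esym, rule eqv.C1, rule eqv.refl)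
  also have "eqv st \<dots> (Prob e 1 0 (Test BZero))" by (rule odot_seq)
  finally show ?thesis .
qed

lemma prob_zero_odot: "eqv st (Prob x 0 1 g) (Prob (odot 0) 1 1 g)"
proof -
  have "eqv st (Prob x (1 * 0) 1 g) (Prob (Seq (odot 0) x) 1 1 g)" by (rule eqv.W4)
  also have "eqv st \<dots> (Prob (odot 0) 1 1 g)" by (rule eqv.cong_prob, rule eqv.C2, rule eqv.refl)
  finally show ?thesis by simp
qed

lemma prob_zero_left: "eqv st (Prob x 0 1 g) g"
proof -
  have "eqv st g (Prob g 1 0 (Test BZero))" by (rule prob_10_zero)
  also have "eqv st \<dots> (Prob (Test BZero) 0 1 g)" by (rule eqv.W2)
  also have "eqv st \<dots> (Prob (odot 0) 1 1 g)" by (rule prob_zero_odot)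
  also have "eqv st \<dots> (Prob x 0 1 g)" by (rule esym, rule prob_zero_odot)
  finally show ?thesis by (rule esym)
qed

lemma odot0_left: "eqv st (Prob (odot 0) 1 1 g) g"
  by (meson prob_zero_left prob_zero_odot eqv.sym eqv.trans)

lemma prob_10: "eqv st (Prob e 1 0 X) e"
  by (meson prob_zero_left eqv.W2 eqv.trans)

lemma odot_prob: "eqv st (Seq (odot u) (Prob e r s f)) (Prob e (u * r) (u * s) f)"
proof -
  have "eqv st (Seq (odot u) (Prob e r s f)) (Prob (Prob e r s f) u 0 (Test BZero))" by (rule odot_seq)
  also have "eqv st \<dots> (Prob (Test BZero) 0 u (Prob e r s f))" by (rule eqv.W2)
  also have "eqv st \<dots> (Prob (Test BZero) 0 1 (Prob e (u * r) (u * s) f))" by (rule eqv.D2)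
  also have "eqv st \<dots> (Prob e (u * r) (u * s) f)" by (rule prob_zero_left)
  finally show ?thesis .
qed

lemma prob_push: "eqv st (Prob e a u X) (Prob e a 1 (Seq (odot u) X))"
proof -
  have "eqv st (Prob e a u X) (Prob e a u (Prob X 1 0 (Test BZero)))"
    by (rule eqv.cong_prob, rule eqv.refl, rule prob_10_zero)
  also have "eqv st \<dots> (Prob e a 1 (Prob X (u * 1) (u * 0) (Test BZero)))" by (rule eqv.D2)
  also have "eqv st \<dots> (Prob e a 1 (Seq (odot u) X))"
    by (simp, rule eqv.cong_prob, rule eqv.refl, rule esym, rule odot_seq)
  finally show ?thesis .
qed

lemma prob_swap: "eqv st (Prob e r 1 (Prob f s 1 g)) (Prob f s 1 (Prob e r 1 g))"
proof -
  have "eqv st (Prob e r 1 (Prob f s 1 g)) (Prob (Prob e r (1 * s) f) 1 (1 * 1) g)" by (rule eqv.W3)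
  also have "eqv st \<dots> (Prob (Prob f s (1 * r) e) 1 (1 * 1) g)"
    by (simp, rule eqv.cong_prob, rule eqv.W2, rule eqv.refl)
  also have "eqv st \<dots> (Prob f s 1 (Prob e r 1 g))" by (rule esym, rule eqv.W3)
  finally show ?thesis .
qed

lemma prob_merge: "eqv st (Prob e r 1 (Prob e s 1 g)) (Prob e (r + s) 1 g)"
proof -
  have "eqv st (Prob e r 1 (Prob e s 1 g)) (Prob (Prob e r (1 * s) e) 1 (1 * 1) g)" by (rule eqv.W3)
  also have "eqv st \<dots> (Prob (Seq (odot (r + s)) e) 1 1 g)"
    by (simp, rule eqv.cong_prob, rule eqv.W1, rule eqv.refl)
  also have "eqv st \<dots> (Prob e (1 * (r + s)) 1 g)" by (rule esym, rule eqv.W4)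
  finally show ?thesis by simp
qed

lemma prob_assoc: "eqv st (Prob (Prob e r 1 R) 1 1 Y) (Prob e r 1 (Prob R 1 1 Y))"
proof -
  have "eqv st (Prob e r 1 (Prob R 1 1 Y)) (Prob (Prob e r (1 * 1) R) 1 (1 * 1) Y)" by (rule eqv.W3)
  then show ?thesis by (simp add: eqv.sym)
qed

lemma ws_append: "eqv st (Prob (ws L1) 1 1 (ws L2)) (ws (L1 @ L2))"
proof (induction L1)
  case Nil then show ?case by (simp add: odot0_left)
next
  case (Cons q L)
  have "eqv st (Prob (ws (q # L)) 1 1 (ws L2)) (Prob (snd q) (fst q) 1 (Prob (ws L) 1 1 (ws L2)))"
    by (simp add: prob_assoc)
  also have "eqv st \<dots> (ws ((q # L) @ L2))" by (simp, rule eqv.cong_prob, rule eqv.refl, rule Cons.IH)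
  finally show ?case .
qed

lemma ws_scale: "eqv st (Seq (odot u) (ws L)) (ws (scl u L))"
proof (induction L)
  case Nil
  have "eqv st (Seq (odot u) (odot 0)) (Prob (Test BOne) (u * 0) (u * 0) (Test BZero))"
    unfolding odot_def[of 0] by (rule odot_prob)
  then show ?case by (simp add: scl_def odot_def)
next
  case (Cons q L)
  have "eqv st (Seq (odot u) (ws (q # L))) (Prob (snd q) (u * fst q) (u * 1) (ws L))"
    by (simp add: odot_prob del: mult_1_right)
  also have "eqv st \<dots> (Prob (snd q) (u * fst q) 1 (Seq (odot u) (ws L)))" by (simp add: prob_push)
  also have "eqv st \<dots> (ws (scl u (q # L)))"
    by (simp add: scl_def, rule eqv.cong_prob, rule eqv.refl, use Cons.IH in \<open>simp add: scl_def\<close>)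
  finally show ?case .
qed

lemma scl_1[simp]: "scl 1 L = L"
  by (simp add: scl_def)

lemma ws_prob:
  assumes "eqv st X (ws L1)" "eqv st Y (ws L2)"
  shows "eqv st (Prob X r s Y) (ws (scl r L1 @ scl s L2))"
proof -
  have "eqv st (Prob X (1 * r) s Y) (Prob (Seq (odot r) X) 1 s Y)" by (rule eqv.W4)
  also have "eqv st \<dots> (Prob Y s 1 (Seq (odot r) X))" by (rule eqv.W2)
  also have "eqv st \<dots> (Prob Y (1 * s) 1 (Seq (odot r) X))" by (simp add: eqv.refl)
  also have "eqv st \<dots> (Prob (Seq (odot s) Y) 1 1 (Seq (odot r) X))" by (rule eqv.W4)
  also have "eqv st \<dots> (Prob (Seq (odot r) X) 1 1 (Seq (odot s) Y))" by (rule eqv.W2)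
  also have "eqv st \<dots> (Prob (ws (scl r L1)) 1 1 (ws (scl s L2)))"
    by (rule eqv.cong_prob; rule eqv.trans[OF eqv.cong_seq[OF eqv.refl] ws_scale], rule assms)
  also have "eqv st \<dots> (ws (scl r L1 @ scl s L2))" by (rule ws_append)
  finally show ?thesis by simp
qed

lemma ws_single: "eqv st (ws [(1, x)]) x"
proof -
  have "eqv st (Prob x 1 0 (odot 1)) (Prob x 1 1 (Prob (Test BOne) (0 * 1) (0 * 0) (Test BZero)))"
    unfolding odot_def by (rule eqv.D2)
  then have "eqv st (Prob x 1 0 (odot 1)) (ws [(1, x)])" by (simp add: odot_def)
  then show ?thesis by (meson prob_10 eqv.sym eqv.trans)
qed

lemma ws_seq: "eqv st (Seq (ws L) g) (ws (map (\<lambda>q. (fst q, Seq (snd q) g)) L))"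
proof (induction L)
  case Nil then show ?case by (simp add: eqv.C2)
next
  case (Cons q L)
  have "eqv st (Seq (Prob (snd q) (fst q) 1 (ws L)) g) (Prob (Seq (snd q) g) (fst q) 1 (Seq (ws L) g))"
    by (rule eqv.S4)
  also have "eqv st \<dots> (Prob (Seq (snd q) g) (fst q) 1 (ws (map (\<lambda>q. (fst q, Seq (snd q) g)) L)))"
    by (rule eqv.cong_prob, rule eqv.refl, rule Cons.IH)
  finally show ?case by simp
qed

lemma ws_flat:
  assumes "\<And>d. d \<in> set xs \<Longrightarrow> eqv st (Seq (Test c) (X d)) (Seq (Test c) (ws (K d)))"
  shows "eqv st (Seq (Test c) (ws (map (\<lambda>d. (\<nu> d, X d)) xs)))
                (Seq (Test c) (ws (concat (map (\<lambda>d. scl (\<nu> d) (K d)) xs))))"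
  using assms
proof (induction xs)
  case Nil then show ?case by (simp add: eqv.refl)
next
  case (Cons d xs)
  let ?R = "ws (map (\<lambda>d. (\<nu> d, X d)) xs)"
  let ?R' = "ws (concat (map (\<lambda>d. scl (\<nu> d) (K d)) xs))"
  have "eqv st (Seq (Test c) (ws (map (\<lambda>d. (\<nu> d, X d)) (d # xs))))
     (Seq (Test c) (Prob (Seq (Test c) (X d)) (\<nu> d) 1 (Seq (Test c) ?R)))"
    by (simp, rule eqv.D3)
  also have "eqv st \<dots> (Seq (Test c) (Prob (Seq (Test c) (ws (K d))) (\<nu> d) 1 (Seq (Test c) ?R')))"
    by (rule eqv.cong_seq[OF eqv.refl], rule eqv.cong_prob, rule Cons.prems, simp, rule Cons.IH, rule Cons.prems, simp)
  also have "eqv st \<dots> (Seq (Test c) (Prob (ws (K d)) (\<nu> d) 1 ?R'))" by (rule esym, rule eqv.D3)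
  also have "eqv st \<dots> (Seq (Test c) (ws (scl (\<nu> d) (K d) @ scl 1 (concat (map (\<lambda>d. scl (\<nu> d) (K d)) xs)))))"
    by (rule eqv.cong_seq, rule eqv.refl, rule ws_prob; rule eqv.refl)
  finally show ?case by simp
qed

lemma wt_Cons: "wt (q # L) x = (if snd q = x then fst q + wt L x else wt L x)"
  by (simp add: wt_def)

lemma wt_Nil[simp]: "wt [] x = 0" by (simp add: wt_def)

lemma ws_pull: "eqv st (ws L) (Prob x (wt L x) 1 (ws (filter (\<lambda>q. snd q \<noteq> x) L)))"
proof (induction L)
  case Nil then show ?case by (simp, rule esym, rule prob_zero_left)
next
  case (Cons q L)
  let ?F = "ws (filter (\<lambda>q. snd q \<noteq> x) L)"
  show ?case
  proof (cases "snd q = x")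
    case True
    have "eqv st (ws (q # L)) (Prob x (fst q) 1 (Prob x (wt L x) 1 ?F))"
      using True Cons.IH by (simp, intro eqv.cong_prob eqv.refl)
    also have "eqv st \<dots> (Prob x (fst q + wt L x) 1 ?F)" by (rule prob_merge)
    finally show ?thesis using True by (simp add: wt_Cons)
  next
    case False
    have "eqv st (ws (q # L)) (Prob (snd q) (fst q) 1 (Prob x (wt L x) 1 ?F))"
      using Cons.IH by (simp, intro eqv.cong_prob eqv.refl)
    also have "eqv st \<dots> (Prob x (wt L x) 1 (Prob (snd q) (fst q) 1 ?F))" by (rule prob_swap)
    finally show ?thesis using False by (simp add: wt_Cons)
  qed
qed

lemma wt_filter: "wt (filter (\<lambda>q. snd q \<noteq> x) L) y = (if y = x then 0 else wt L y)"
  by (induction L) (auto simp: wt_Cons)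

lemma ws_eq_aux:
  "length L1 + length L2 = n \<Longrightarrow> wt L1 = wt L2 \<Longrightarrow> eqv st (ws L1) (ws (L2 :: ('s::{semiring_0,monoid_mult} \<times> ('t, 'p, 'v, 's) exp) list))"
proof (induction n arbitrary: L1 L2 rule: less_induct)
  case (less n)
  show ?case
  proof (cases "L1 @ L2 = []")
    case True then show ?thesis by (simp add: eqv.refl)
  next
    case False
    then obtain q where q: "q \<in> set (L1 @ L2)" by (metis list.set_intros(1) neq_Nil_conv)
    let ?x = "snd q"
    let ?F1 = "filter (\<lambda>q. snd q \<noteq> ?x) L1"
    let ?F2 = "filter (\<lambda>q. snd q \<noteq> ?x) L2"
    have "length ?F1 + length ?F2 < n"
    proof -
      have a: "length ?F1 \<le> length L1" "length ?F2 \<le> length L2" by auto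
      have "length ?F1 < length L1 \<or> length ?F2 < length L2"
        using q by (auto intro!: length_filter_less)
      then show ?thesis using a less.prems(1) by linarith
    qed
    moreover have "wt ?F1 = wt ?F2" using less.prems(2) by (auto simp: fun_eq_iff wt_filter)
    ultimately have IH: "eqv st (ws ?F1) (ws ?F2)" using less.IH by blast
    have "eqv st (ws L1) (Prob ?x (wt L1 ?x) 1 (ws ?F1))" by (rule ws_pull)
    also have "eqv st \<dots> (Prob ?x (wt L2 ?x) 1 (ws ?F2))"
      using less.prems(2) IH by (simp, intro eqv.cong_prob eqv.refl)
    also have "eqv st \<dots> (ws L2)" by (rule esym, rule ws_pull)
    finally show ?thesis .
  qed
qed

lemma ws_eq: "wt L1 = wt L2 \<Longrightarrow> eqv st (ws L1) (ws L2)"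
  using ws_eq_aux by blast



lemma expD_inj[simp]: "(expD d = expD d') = (d = d')"
  by (cases d; cases d') auto

lemma inj_expD: "inj expD" by (rule injI) simp

lemma wt_notin: "x \<notin> snd ` set L \<Longrightarrow> wt L x = 0"
  by (induction L) (auto simp: wt_Cons)

lemma wt_append[simp]: "wt (A @ B) x = wt A x + wt B x"
  by (simp add: wt_def)

lemma wt_scl[simp]: "wt (scl u L) x = u * wt L x"
  by (induction L) (auto simp: wt_Cons scl_def distrib_left)

lemma wt_single: "wt [(r, y)] x = (if y = x then r else 0)"
  by (simp add: wt_Cons)

lemma wt_concat: "wt (concat (map (\<lambda>d. scl (\<nu> d) (K d)) xs)) x = sum_list (map (\<lambda>d. \<nu> d * wt (K d) x) xs)"
  by (induction xs) auto

lemma wt_map_expD: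
  "distinct xs \<Longrightarrow> wt (map (\<lambda>d. (\<nu> d, expD d)) xs) (expD y) = (if y \<in> set xs then \<nu> y else 0)"
  by (induction xs) (auto simp: wt_Cons)

lemma rep:
  assumes nu: "\<And>d. \<nu> d = wt L (expD d)" and rng: "snd ` set L \<subseteq> range expD"
  shows "finite (supp \<nu>) \<and> eqv st (ws (map (\<lambda>d. (\<nu> d, expD d)) (enum_of (supp \<nu>)))) (ws L)"
proof
  have "supp \<nu> \<subseteq> expD -` (snd ` set L)"
    using nu wt_notin unfolding supp_def by fastforce
  moreover have "finite (expD -` (snd ` set L))"
    by (rule finite_vimageI, simp, rule inj_expD)
  ultimately show fin: "finite (supp \<nu>)" by (rule finite_subset)
  note sp = enum_of_spec[OF fin]
  show "eqv st (ws (map (\<lambda>d. (\<nu> d, expD d)) (enum_of (supp \<nu>)))) (ws L)"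
  proof (rule ws_eq, rule ext)
    fix x
    show "wt (map (\<lambda>d. (\<nu> d, expD d)) (enum_of (supp \<nu>))) x = wt L x"
    proof (cases "x \<in> range expD")
      case True
      then obtain y where "x = expD y" by auto
      then show ?thesis using sp nu wt_map_expD[of _ \<nu> y] by (auto simp: supp_def)
    next
      case False
      then have "x \<notin> snd ` set L" using rng by auto
      moreover have "x \<notin> snd ` set (map (\<lambda>d. (\<nu> d, expD d)) (enum_of (supp \<nu>)))" using False by auto
      ultimately show ?thesis by (simp add: wt_notin)
    qed
  qed
qed

definition Lst :: "('s \<Rightarrow> 's) \<Rightarrow> ('t, 'p, 'v, 's::{semiring_0,monoid_mult}) exp \<Rightarrow> 't atom
   \<Rightarrow> ('s \<times> ('t, 'p, 'v, 's) exp) list" where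
  "Lst st e \<alpha> = map (\<lambda>d. (deriv st e \<alpha> d, expD d)) (enum_of (supp (deriv st e \<alpha>)))"

lemma wt_Lst: "finite (supp (deriv st e \<alpha>)) \<Longrightarrow> wt (Lst st e \<alpha>) (expD y) = deriv st e \<alpha> y"
proof -
  assume f: "finite (supp (deriv st e \<alpha>))"
  note sp = enum_of_spec[OF f]
  show ?thesis unfolding Lst_def
    by (subst wt_map_expD, use sp in blast, use sp in \<open>auto simp: supp_def\<close>)
qed

lemma Lst_rng: "snd ` set (Lst st e \<alpha>) \<subseteq> range expD"
  unfolding Lst_def by auto

lemma close:
  assumes "\<And>d. deriv st e \<alpha> d = wt L (expD d)" "snd ` set L \<subseteq> range expD"
    and "eqv st (Seq T e) (Seq T (ws L))"
  shows "finite (supp (deriv st e \<alpha>)) \<and> eqv st (Seq T e) (Seq T (ws (Lst st e \<alpha>)))"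
proof -
  note r = rep[OF assms(1,2), of st]
  show ?thesis
  proof
    show "finite (supp (deriv st e \<alpha>))" using r by blast
    have "eqv st (Seq T e) (Seq T (ws L))" by (rule assms(3))
    also have "eqv st \<dots> (Seq T (ws (Lst st e \<alpha>)))"
      unfolding Lst_def using r by (intro eqv.cong_seq eqv.refl) (blast intro: eqv.sym)
    finally show "eqv st (Seq T e) (Seq T (ws (Lst st e \<alpha>)))" .
  qed
qed

definition cm :: "('t, 'p, 'v, 's) exp \<Rightarrow> ('p, 'v, ('t, 'p, 'v, 's) exp) dres \<Rightarrow> ('p, 'v, ('t, 'p, 'v, 's) exp) dres" where
  "cm f d = (case d of DAct p e' \<Rightarrow> DAct p (Seq e' f) | _ \<Rightarrow> d)"

lemma entry:
  fixes f :: "('t, 'p, 'v, 's::{semiring_0,monoid_mult}) exp"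
  shows "d \<noteq> DAcc \<Longrightarrow> eqv st (Seq (expD d) f) (ws [(1, expD (cm f d))])"
proof -
  assume "d \<noteq> DAcc"
  have "eqv st (Seq (expD d) f) (expD (cm f d))"
    using \<open>d \<noteq> DAcc\<close> by (cases d) (auto simp: cm_def intro: eqv.S3 eqv.S6 eqv.S2)
  then show ?thesis by (meson ws_single eqv.sym eqv.trans)
qed

lemma sum_delta_mult:
  "finite S \<Longrightarrow> (\<Sum>d\<in>S. (\<nu> d :: 's::{semiring_0,monoid_mult}) * (if d = d0 then 1 else 0)) = (if d0 \<in> S then \<nu> d0 else 0)"
proof -
  assume "finite S"
  have "(\<Sum>d\<in>S. \<nu> d * (if d = d0 then 1 else 0)) = (\<Sum>d\<in>S. if d = d0 then \<nu> d else 0)"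
    by (rule sum.cong) auto
  also have "\<dots> = (if d0 \<in> S then \<nu> d0 else 0)" using \<open>finite S\<close> by (simp add: sum.delta')
  finally show ?thesis .
qed



lemma expD_one[simp]: "(expD d = Test BOne) = (d = DAcc)"
  using expD_inj[of d DAcc] by simp

lemma expD_iffs[simp]:
  "(Test BOne = expD d) = (d = DAcc)"
  "(Test BZero = expD d) = (d = DRej)" "(expD d = Test BZero) = (d = DRej)"
  "(Ret v = expD d) = (d = DOut v)" "(expD d = Ret v) = (d = DOut v)"
  "(Seq (Act p) g = expD d) = (d = DAct p g)" "(expD d = Seq (Act p) g) = (d = DAct p g)"
  by (cases d; auto)+

lemma atom_test_eq:
  fixes \<alpha> :: "'t::finite atom"
  assumes "evalB b \<alpha> = evalB c \<alpha>"
  shows "eqv st (Seq (Test (atom_test \<alpha>)) (Test b)) (Seq (Test (atom_test \<alpha>)) (Test c))"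
proof -
  have "eqv st (Seq (Test (atom_test \<alpha>)) (Test b)) (Test (BAnd (atom_test \<alpha>) b))" by (rule eqv.S7)
  also have "eqv st \<dots> (Test (BAnd (atom_test \<alpha>) c))"
    by (rule eqv.ba_test, use assms in \<open>auto simp: beq_def atom_test_spec\<close>)
  also have "eqv st \<dots> (Seq (Test (atom_test \<alpha>)) (Test c))" by (rule esym, rule eqv.S7)
  finally show ?thesis .
qed

lemma seq_ws_single: "eqv st (Seq T x) (Seq T (ws [(1, x)]))"
  by (rule eqv.cong_seq, rule eqv.refl, rule esym, rule ws_single)

lemma case_test:
  fixes \<alpha> :: "'t::finite atom" and x :: "('t, 'p, 'v, 's::{semiring_0,monoid_mult}) exp"
  assumes xdef: "x = Test b"
  shows "finite (supp (deriv st x \<alpha>)) \<and>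
    eqv st (Seq (Test (atom_test \<alpha>)) x) (Seq (Test (atom_test \<alpha>)) (ws (Lst st x \<alpha>)))"
  unfolding xdef
proof (rule close)
  let ?d = "if evalB b \<alpha> then DAcc else DRej"
  show "deriv st (Test b) \<alpha> d = wt [(1, expD ?d)] (expD d)" for d
    by (simp add: wt_single delta_def)
  show "snd ` set [(1, expD ?d)] \<subseteq> range expD" by auto
  have "eqv st (Seq (Test (atom_test \<alpha>)) (Test b)) (Seq (Test (atom_test \<alpha>)) (expD ?d))"
    by (cases "evalB b \<alpha>") (auto intro: atom_test_eq)
  also have "eqv st \<dots> (Seq (Test (atom_test \<alpha>)) (ws [(1, expD ?d)]))" by (rule seq_ws_single)
  finally show "eqv st (Seq (Test (atom_test \<alpha>)) (Test b)) (Seq (Test (atom_test \<alpha>)) (ws [(1, expD ?d)]))" .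
qed

lemma case_ret:
  fixes x :: "('t, 'p, 'v, 's::{semiring_0,monoid_mult}) exp"
  assumes xdef: "x = Ret v"
  shows "finite (supp (deriv st x \<alpha>)) \<and>
    eqv st (Seq T x) (Seq T (ws (Lst st x \<alpha>)))"
  unfolding xdef
proof (rule close)
  show "deriv st (Ret v) \<alpha> d = wt [(1, expD (DOut v))] (expD d)" for d
    by (simp add: wt_single delta_def)
  show "snd ` set [(1, expD (DOut v))] \<subseteq> range expD" by auto
  show "eqv st (Seq T (Ret v)) (Seq T (ws [(1, expD (DOut v))]))" using seq_ws_single by simp
qed

lemma case_act:
  fixes x :: "('t, 'p, 'v, 's::{semiring_0,monoid_mult}) exp"
  assumes xdef: "x = Act p"
  shows "finite (supp (deriv st x \<alpha>)) \<and>
    eqv st (Seq T x) (Seq T (ws (Lst st x \<alpha>)))"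
  unfolding xdef
proof (rule close)
  show "deriv st (Act p) \<alpha> d = wt [(1, expD (DAct p (Test BOne)))] (expD d)" for d
    by (simp add: wt_single delta_def)
  show "snd ` set [(1, expD (DAct p (Test BOne)))] \<subseteq> range expD" by auto
  have "eqv st (Seq T (Act p)) (Seq T (Seq (Act p) (Test BOne)))"
    by (rule eqv.cong_seq, rule eqv.refl, rule eqv.S1b)
  also have "eqv st \<dots> (Seq T (ws [(1, expD (DAct p (Test BOne)))]))" using seq_ws_single by simp
  finally show "eqv st (Seq T (Act p)) (Seq T (ws [(1, expD (DAct p (Test BOne)))]))" .
qed

lemma case_guard:
  fixes \<alpha> :: "'t::finite atom"
  assumes IHe: "finite (supp (deriv st e \<alpha>)) \<and>
    eqv st (Seq (Test (atom_test \<alpha>)) e) (Seq (Test (atom_test \<alpha>)) (ws (Lst st e \<alpha>)))"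
  and IHf: "finite (supp (deriv st f \<alpha>)) \<and>
    eqv st (Seq (Test (atom_test \<alpha>)) f) (Seq (Test (atom_test \<alpha>)) (ws (Lst st f \<alpha>)))"
  shows "finite (supp (deriv st (Guard e b f) \<alpha>)) \<and>
    eqv st (Seq (Test (atom_test \<alpha>)) (Guard e b f)) (Seq (Test (atom_test \<alpha>)) (ws (Lst st (Guard e b f) \<alpha>)))"
proof (cases "evalB b \<alpha>")
  case True
  have "eqv st (Seq (Test (atom_test \<alpha>)) (Guard e b f)) (Seq (Test (atom_test \<alpha>)) e)"
    by (rule guard_left, use True in \<open>auto simp: beq_def atom_test_spec\<close>)
  then show ?thesis using IHe True by (auto simp: Lst_def intro: eqv.trans)
next
  case False
  have "eqv st (Seq (Test (atom_test \<alpha>)) (Guard e b f)) (Seq (Test (atom_test \<alpha>)) f)"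
    by (rule guard_right, use False in \<open>auto simp: beq_def atom_test_spec\<close>)
  then show ?thesis using IHf False by (auto simp: Lst_def intro: eqv.trans)
qed

lemma case_prob:
  fixes \<alpha> :: "'t::finite atom"
  assumes IHe: "finite (supp (deriv st e \<alpha>)) \<and>
    eqv st (Seq (Test (atom_test \<alpha>)) e) (Seq (Test (atom_test \<alpha>)) (ws (Lst st e \<alpha>)))"
  and IHf: "finite (supp (deriv st f \<alpha>)) \<and>
    eqv st (Seq (Test (atom_test \<alpha>)) f) (Seq (Test (atom_test \<alpha>)) (ws (Lst st f \<alpha>)))"
  shows "finite (supp (deriv st (Prob e r s f) \<alpha>)) \<and>
    eqv st (Seq (Test (atom_test \<alpha>)) (Prob e r s f)) (Seq (Test (atom_test \<alpha>)) (ws (Lst st (Prob e r s f) \<alpha>)))"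
proof (rule close)
  let ?L = "scl r (Lst st e \<alpha>) @ scl s (Lst st f \<alpha>)"
  let ?A = "Test (atom_test \<alpha>)"
  show "deriv st (Prob e r s f) \<alpha> d = wt ?L (expD d)" for d
    using IHe IHf by (simp add: wt_Lst)
  show "snd ` set ?L \<subseteq> range expD" using Lst_rng[of st e \<alpha>] Lst_rng[of st f \<alpha>]
    by (auto simp: scl_def)
  have "eqv st (Seq ?A (Prob e r s f)) (Seq ?A (Prob (Seq ?A e) r s (Seq ?A f)))" by (rule eqv.D3)
  also have "eqv st \<dots> (Seq ?A (Prob (Seq ?A (ws (Lst st e \<alpha>))) r s (Seq ?A (ws (Lst st f \<alpha>)))))"
    by (rule eqv.cong_seq[OF eqv.refl], rule eqv.cong_prob, rule conjunct2[OF IHe], rule conjunct2[OF IHf])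
  also have "eqv st \<dots> (Seq ?A (Prob (ws (Lst st e \<alpha>)) r s (ws (Lst st f \<alpha>))))" by (rule esym, rule eqv.D3)
  also have "eqv st \<dots> (Seq ?A (ws ?L))" by (rule eqv.cong_seq[OF eqv.refl], rule ws_prob; rule eqv.refl)
  finally show "eqv st (Seq ?A (Prob e r s f)) (Seq ?A (ws ?L))" .
qed



lemma case_seq:
  fixes \<alpha> :: "'t::finite atom"
  assumes IHe: "finite (supp (deriv st e \<alpha>)) \<and>
    eqv st (Seq (Test (atom_test \<alpha>)) e) (Seq (Test (atom_test \<alpha>)) (ws (Lst st e \<alpha>)))"
  and IHf: "finite (supp (deriv st f \<alpha>)) \<and>
    eqv st (Seq (Test (atom_test \<alpha>)) f) (Seq (Test (atom_test \<alpha>)) (ws (Lst st f \<alpha>)))"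
  shows "finite (supp (deriv st (Seq e f) \<alpha>)) \<and>
    eqv st (Seq (Test (atom_test \<alpha>)) (Seq e f)) (Seq (Test (atom_test \<alpha>)) (ws (Lst st (Seq e f) \<alpha>)))"
proof -
  let ?A = "Test (atom_test \<alpha>)"
  define xs where "xs = enum_of (supp (deriv st e \<alpha>))"
  have sp: "distinct xs" "set xs = supp (deriv st e \<alpha>)"
    using enum_of_spec IHe unfolding xs_def by blast+
  define K where "K d = (if d = DAcc then Lst st f \<alpha> else [(1, expD (cm f d))])" for d
  define L where "L = concat (map (\<lambda>d. scl (deriv st e \<alpha> d) (K d)) xs)"
  have Le: "Lst st e \<alpha> = map (\<lambda>d. (deriv st e \<alpha> d, expD d)) xs" unfolding Lst_def xs_def ..
  show ?thesis
  proof (rule close)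
    show "deriv st (Seq e f) \<alpha> y = wt L (expD y)" for y
    proof -
      have "wt L (expD y) = (\<Sum>d\<in>set xs. deriv st e \<alpha> d * wt (K d) (expD y))"
        unfolding L_def wt_concat using sp by (simp add: sum_list_distinct_conv_sum_set)
      also have "\<dots> = (\<Sum>d\<in>supp (deriv st e \<alpha>). deriv st e \<alpha> d * cont f (deriv st f \<alpha>) d y)"
      proof (rule sum.cong)
        show "set xs = supp (deriv st e \<alpha>)" by (rule sp(2))
        fix d
        show "deriv st e \<alpha> d * wt (K d) (expD y) = deriv st e \<alpha> d * cont f (deriv st f \<alpha>) d y"
          using IHe IHf
          by (cases d) (auto simp: K_def wt_Lst cont_def wt_single delta_def cm_def)
      qed
      finally show ?thesis by simp
    qed
    show "snd ` set L \<subseteq> range expD"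
      using Lst_rng[of st f \<alpha>] by (auto simp: L_def K_def scl_def split: if_splits; force)
    have "eqv st (Seq ?A (Seq e f)) (Seq (Seq ?A e) f)" by (rule esym, rule eqv.S2)
    also have "eqv st \<dots> (Seq (Seq ?A (ws (Lst st e \<alpha>))) f)"
      by (rule eqv.cong_seq, rule conjunct2[OF IHe], rule eqv.refl)
    also have "eqv st \<dots> (Seq ?A (Seq (ws (Lst st e \<alpha>)) f))" by (rule eqv.S2)
    also have "eqv st \<dots> (Seq ?A (ws (map (\<lambda>d. (deriv st e \<alpha> d, Seq (expD d) f)) xs)))"
      by (rule eqv.cong_seq[OF eqv.refl], rule eqv.trans[OF ws_seq], simp add: Le o_def eqv.refl)
    also have "eqv st \<dots> (Seq ?A (ws L))"
      unfolding L_def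
    proof (rule ws_flat)
      fix d
      show "eqv st (Seq ?A (Seq (expD d) f)) (Seq ?A (ws (K d)))"
      proof (cases "d = DAcc")
        case True
        have "eqv st (Seq ?A (Seq (Test BOne) f)) (Seq ?A f)"
          by (rule eqv.cong_seq, rule eqv.refl, rule eqv.S1a)
        then have "eqv st (Seq ?A (Seq (expD d) f)) (Seq ?A f)" using True by simp
        also have "eqv st \<dots> (Seq ?A (ws (K d)))" using IHf True by (simp add: K_def)
        finally show ?thesis .
      next
        case False
        then have Kd: "K d = [(1, expD (cm f d))]" by (simp add: K_def)
        have "eqv st (Seq (expD d) f) (ws (K d))" unfolding Kd by (rule entry[OF False])
        then show ?thesis by (rule eqv.cong_seq[OF eqv.refl])
      qed
    qed
    finally show "eqv st (Seq ?A (Seq e f)) (Seq ?A (ws L))" .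
  qed
qed



lemma sum_zero_if:
  "(\<And>d. d \<in> S \<Longrightarrow> \<not> P d) \<Longrightarrow> (\<Sum>d\<in>S. (\<nu> d :: 's::{semiring_0,monoid_mult}) * (if P d then 1 else 0)) = 0"
  by (rule sum.neutral) auto

lemma sum_delta_if:
  "finite S \<Longrightarrow> (\<And>d. d \<in> S \<Longrightarrow> P d = (d = d0)) \<Longrightarrow>
   (\<Sum>d\<in>S. (\<nu> d :: 's::{semiring_0,monoid_mult}) * (if P d then 1 else 0)) = (if d0 \<in> S then \<nu> d0 else 0)"
proof -
  assume f: "finite S" and P: "\<And>d. d \<in> S \<Longrightarrow> P d = (d = d0)"
  have "(\<Sum>d\<in>S. \<nu> d * (if P d then 1 else 0)) = (\<Sum>d\<in>S. \<nu> d * (if d = d0 then 1 else 0))"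
    by (rule sum.cong) (auto simp: P)
  also have "\<dots> = (if d0 \<in> S then \<nu> d0 else 0)" using f by (rule sum_delta_mult)
  finally show ?thesis .
qed

lemma loop_sum:
  assumes f: "finite S" and nacc: "DAcc \<notin> S"
  shows "(\<Sum>d\<in>S. (\<nu> d :: 's::{semiring_0,monoid_mult}) * (if cm h d = y then 1 else 0)) =
    (case y of DAcc \<Rightarrow> 0
      | DRej \<Rightarrow> (if DRej \<in> S then \<nu> DRej else 0)
      | DOut v \<Rightarrow> (if DOut v \<in> S then \<nu> (DOut v) else 0)
      | DAct p g \<Rightarrow> (case g of Seq e' h' \<Rightarrow> (if h' = h then (if DAct p e' \<in> S then \<nu> (DAct p e') else 0) else 0)
                    | _ \<Rightarrow> 0))"
proof (cases y)
  case DAcc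
  have "(\<Sum>d\<in>S. \<nu> d * (if cm h d = y then 1 else 0)) = 0"
    using DAcc nacc by (intro sum_zero_if) (auto simp: cm_def split: dres.splits)
  then show ?thesis using DAcc by simp
next
  case DRej
  have "(\<Sum>d\<in>S. \<nu> d * (if cm h d = y then 1 else 0)) = (if DRej \<in> S then \<nu> DRej else 0)"
    using DRej by (intro sum_delta_if f) (auto simp: cm_def split: dres.splits)
  then show ?thesis using DRej by simp
next
  case (DOut v)
  have "(\<Sum>d\<in>S. \<nu> d * (if cm h d = y then 1 else 0)) = (if DOut v \<in> S then \<nu> (DOut v) else 0)"
    using DOut by (intro sum_delta_if f) (auto simp: cm_def split: dres.splits)
  then show ?thesis using DOut by simp
next
  case (DAct p g)
  show ?thesis
  proof (cases "\<exists>e' h'. g = Seq e' h' \<and> h' = h")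
    case True
    then obtain e' where g: "g = Seq e' h" by auto
    have "(\<Sum>d\<in>S. \<nu> d * (if cm h d = y then 1 else 0)) = (if DAct p e' \<in> S then \<nu> (DAct p e') else 0)"
      using DAct g by (intro sum_delta_if f) (auto simp: cm_def split: dres.splits)
    then show ?thesis using DAct g by simp
  next
    case False
    have "(\<Sum>d\<in>S. \<nu> d * (if cm h d = y then 1 else 0)) = 0"
      using DAct False by (intro sum_zero_if) (auto simp: cm_def split: dres.splits)
    moreover have "(case g of Seq e' h' \<Rightarrow> (if h' = h then (if DAct p e' \<in> S then \<nu> (DAct p e') else 0) else 0)
                    | _ \<Rightarrow> 0) = 0"
      using False by (cases g) auto
    ultimately show ?thesis using DAct by simp
  qed
qed



lemma case_loop:
  fixes \<alpha> :: "'t::finite atom" and st :: "'s::{semiring_0,monoid_mult} \<Rightarrow> 's"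
    and e :: "('t, 'p, 'v, 's) exp"
  assumes IHe: "\<And>\<beta>. finite (supp (deriv st e \<beta>)) \<and>
    eqv st (Seq (Test (atom_test \<beta>)) e) (Seq (Test (atom_test \<beta>)) (ws (Lst st e \<beta>)))"
  shows "finite (supp (deriv st (Loop e b) \<alpha>)) \<and>
    eqv st (Seq (Test (atom_test \<alpha>)) (Loop e b)) (Seq (Test (atom_test \<alpha>)) (ws (Lst st (Loop e b) \<alpha>)))"
proof (cases "evalB b \<alpha>")
  case False
  let ?A = "Test (atom_test \<alpha>)"
  show ?thesis
  proof (rule close)
    show "deriv st (Loop e b) \<alpha> y = wt [(1, expD DAcc)] (expD y)" for y
      using False by (cases y) (auto simp: wt_single split: exp.splits)
    show "snd ` set [(1, expD DAcc)] \<subseteq> range expD" by auto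
    have "eqv st (Seq ?A (Loop e b)) (Seq ?A (Guard (Seq e (Loop e b)) b (Test BOne)))"
      by (rule eqv.cong_seq[OF eqv.refl], rule eqv.L1)
    also have "eqv st \<dots> (Seq ?A (Test BOne))"
      by (rule guard_right, use False in \<open>auto simp: beq_def atom_test_spec\<close>)
    also have "eqv st \<dots> (Seq ?A (ws [(1, expD DAcc)]))" using seq_ws_single by simp
    finally show "eqv st (Seq ?A (Loop e b)) (Seq ?A (ws [(1, expD DAcc)]))" .
  qed
next
  case True
  let ?A = "Test (atom_test \<alpha>)"
  let ?lp = "Loop e b"
  define \<nu> where "\<nu> = deriv st e \<alpha>"
  define a where "a = \<nu> DAcc"
  define xs where "xs = enum_of (supp \<nu>)"
  have fin: "finite (supp \<nu>)" using IHe unfolding \<nu>_def by blast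
  have sp: "distinct xs" "set xs = supp \<nu>"
    using enum_of_spec[OF fin] unfolding xs_def by blast+
  define ys where "ys = filter (\<lambda>d. d \<noteq> DAcc) xs"
  have spy: "distinct ys" "set ys = supp \<nu> - {DAcc}" using sp unfolding ys_def by auto
  define F where "F = map (\<lambda>d. (\<nu> d, expD d)) ys"
  have Le: "Lst st e \<alpha> = map (\<lambda>d. (\<nu> d, expD d)) xs" unfolding Lst_def xs_def \<nu>_def ..
  have Fdef: "filter (\<lambda>q. snd q \<noteq> Test BOne) (Lst st e \<alpha>) = F"
    unfolding Le F_def ys_def by (simp add: filter_map o_def)
  have wa: "wt (Lst st e \<alpha>) (Test BOne) = a"
    using wt_Lst[of st e \<alpha> DAcc] IHe unfolding a_def \<nu>_def by simp
  define X where "X = Prob (ws F) 1 a (Test BOne)"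
  have i: "eqv st (Seq ?A e) (Seq ?A X)"
  proof -
    have "eqv st (Seq ?A e) (Seq ?A (ws (Lst st e \<alpha>)))" using IHe by blast
    also have "eqv st \<dots> (Seq ?A (Prob (Test BOne) a 1 (ws F)))"
      by (rule eqv.cong_seq[OF eqv.refl], use ws_pull[of st "Lst st e \<alpha>" "Test BOne"] in \<open>simp add: Fdef wa\<close>)
    also have "eqv st \<dots> (Seq ?A X)" unfolding X_def by (rule eqv.cong_seq[OF eqv.refl], rule eqv.W2)
    finally show ?thesis .
  qed
  have ii: "eqv st e (Guard X (atom_test \<alpha>) e)"
  proof -
    have "eqv st e (Guard e (atom_test \<alpha>) e)" by (rule esym, rule eqv.G1)
    also have "eqv st \<dots> (Guard X (atom_test \<alpha>) e)" by (rule guard_split, rule i, rule eqv.refl)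
    finally show ?thesis .
  qed
  define K where "K d = [(1::'s, expD (cm ?lp d))]" for d
  define L where "L = scl (st a * 1) (concat (map (\<lambda>d. scl (\<nu> d) (K d)) ys))"
  show ?thesis
  proof (rule close)
    show "deriv st (Loop e b) \<alpha> y = wt L (expD y)" for y
    proof -
      have "wt L (expD y) = st a * 1 * (\<Sum>d\<in>set ys. \<nu> d * (if cm ?lp d = y then 1 else 0))"
        unfolding L_def K_def wt_scl wt_concat using spy
        by (simp add: sum_list_distinct_conv_sum_set wt_single)
      also have "\<dots> = st a * 1 * (case y of DAcc \<Rightarrow> 0
      | DRej \<Rightarrow> (if DRej \<in> set ys then \<nu> DRej else 0)
      | DOut v \<Rightarrow> (if DOut v \<in> set ys then \<nu> (DOut v) else 0)
      | DAct p g \<Rightarrow> (case g of Seq e' h' \<Rightarrow> (if h' = ?lp then (if DAct p e' \<in> set ys then \<nu> (DAct p e') else 0) else 0)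
                    | _ \<Rightarrow> 0))"
        by (subst loop_sum, use spy fin in auto)
      also have "\<dots> = deriv st (Loop e b) \<alpha> y"
        using True spy unfolding \<nu>_def a_def
        by (cases y) (auto simp: supp_def split: exp.splits)
      finally show ?thesis by simp
    qed
    show "snd ` set L \<subseteq> range expD" by (auto simp: L_def K_def scl_def)
    have "eqv st (Seq ?A (Loop e b)) (Seq ?A (Guard (Seq (odot (st a * 1)) (Seq (ws F) ?lp)) b (Test BOne)))"
      by (rule eqv.L2, unfold X_def[symmetric], rule ii)
    also have "eqv st \<dots> (Seq ?A (Seq (odot (st a * 1)) (Seq (ws F) ?lp)))"
      by (rule guard_left, use True in \<open>auto simp: beq_def atom_test_spec\<close>)
    also have "eqv st \<dots> (Seq ?A (Seq (odot (st a * 1)) (ws (concat (map (\<lambda>d. scl (\<nu> d) (K d)) ys)))))"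
    proof (rule eqv.cong_seq[OF eqv.refl], rule eqv.cong_seq[OF eqv.refl])
      have "eqv st (Seq (ws F) ?lp) (ws (map (\<lambda>d. (\<nu> d, Seq (expD d) ?lp)) ys))"
        using ws_seq[of st F ?lp] by (simp add: F_def o_def)
      also have "eqv st \<dots> (ws (concat (map (\<lambda>d. scl (\<nu> d) (K d)) ys)))"
      proof -
        have "eqv st (Seq (Test BOne) (ws (map (\<lambda>d. (\<nu> d, Seq (expD d) ?lp)) ys)))
                     (Seq (Test BOne) (ws (concat (map (\<lambda>d. scl (\<nu> d) (K d)) ys))))"
        proof (rule ws_flat)
          fix d assume "d \<in> set ys"
          then have "d \<noteq> DAcc" using spy by auto
          then have "eqv st (Seq (expD d) ?lp) (ws (K d))" unfolding K_def by (rule entry)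
          then show "eqv st (Seq (Test BOne) (Seq (expD d) ?lp)) (Seq (Test BOne) (ws (K d)))"
            by (rule eqv.cong_seq[OF eqv.refl])
        qed
        then show ?thesis by (meson eqv.S1a eqv.sym eqv.trans)
      qed
      finally show "eqv st (Seq (ws F) ?lp) (ws (concat (map (\<lambda>d. scl (\<nu> d) (K d)) ys)))" .
    qed
    also have "eqv st \<dots> (Seq ?A (ws L))" unfolding L_def by (rule eqv.cong_seq[OF eqv.refl], rule ws_scale)
    finally show "eqv st (Seq ?A (Loop e b)) (Seq ?A (ws L))" .
  qed
qed


theorem mainTheorem8:
  fixes st :: "'s::{semiring_0,monoid_mult} \<Rightarrow> 's"
    and e :: "('t::finite, 'p, 'v, 's) exp"
  assumes "positive_sr TYPE('s)"
    and "refinement_sr TYPE('s)"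
    and "conway st"
  shows "eqv st e
           (GS UNIV (\<lambda>\<alpha>. WS (supp (deriv st e \<alpha>)) (deriv st e \<alpha>) expD))"
proof -
  have main: "\<forall>\<alpha>. finite (supp (deriv st e \<alpha>)) \<and>
    eqv st (Seq (Test (atom_test \<alpha>)) e) (Seq (Test (atom_test \<alpha>)) (ws (Lst st e \<alpha>)))"
  proof (induction e)
    case (Act p) show ?case by (intro allI, rule case_act[OF HOL.refl])
  next
    case (Test b) show ?case by (intro allI, rule case_test[OF HOL.refl])
  next
    case (Guard e1 b e2) show ?case by (intro allI, rule case_guard[OF Guard.IH(1)[rule_format] Guard.IH(2)[rule_format]])
  next
    case (Seq e1 e2) show ?case by (intro allI, rule case_seq[OF Seq.IH(1)[rule_format] Seq.IH(2)[rule_format]])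
  next
    case (Loop e1 b) show ?case by (intro allI, rule case_loop, rule Loop.IH[rule_format])
  next
    case (Ret v) show ?case by (intro allI, rule case_ret[OF HOL.refl])
  next
    case (Prob e1 r s e2) show ?case by (intro allI, rule case_prob[OF Prob.IH(1)[rule_format] Prob.IH(2)[rule_format]])
  qed
  show ?thesis
  proof (rule GS_intro)
    fix \<alpha> :: "'t atom"
    have "WS (supp (deriv st e \<alpha>)) (deriv st e \<alpha>) expD = ws (Lst st e \<alpha>)"
      by (simp add: WS_def ws_list_ws Lst_def)
    then show "eqv st (Seq (Test (atom_test \<alpha>)) e)
      (Seq (Test (atom_test \<alpha>)) (WS (supp (deriv st e \<alpha>)) (deriv st e \<alpha>) expD))"
      using main by simp
  qed
qed

end
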